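(* In the setting described in the context, suppose there exists $\mathbf{w}\in S_m$ with $f(\mathbf{w})>0$. Then for any $\mathbf{w}_0=(w_1',\ldots,w_m')^T\in S_m$ with $0<w_i'<1$ for each $i$, $f(\mathbf{w}_0)>0$.
   Context: Given a model matrix $\mathbf{X}\in\mathbb{R}^{m\times p}$ (rows $\mathbf{q}(\mathbf{x}_i)^T$ for distinct design points under a generalized linear model, $m\ge2$, $p\ge2$) and numbers $\nu_1,\ldots,\nu_m\ge0$ (where $\nu_i=(\partial\mu_i/\partial\eta_i)^2/\mathrm{Var}(Y_i)$), let $S_m=\{\mathbf{w}\in\mathbb{R}^m:w_i\ge0,\sum_iw_i=1\}$, and for $\mathbf{w}\in S_m$ let $\mathbf{W}=\mathrm{diag}\{w_1\nu_1,\ldots,w_m\nu_m\}$ and $f(\mathbf{w})=|\mathbf{X}^T\mathbf{W}\mathbf{X}|$. *)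

theory Defs
  imports "HOL-Analysis.Analysis"
begin

definition prob_simplex :: "(real ^ 'm) set" where
  "prob_simplex = {w. (\<forall>i. 0 \<le> w $ i) \<and> (\<Sum>i\<in>UNIV. w $ i) = 1}"

definition weight_mat :: "real ^ 'm \<Rightarrow> real ^ 'm \<Rightarrow> real ^ 'm ^ 'm" where
  "weight_mat nu w = (\<chi> i j. if i = j then w $ i * nu $ i else 0)"

definition fdet :: "real ^ 'p ^ 'm \<Rightarrow> real ^ 'm \<Rightarrow> real ^ 'm \<Rightarrow> real" where
  "fdet X nu w = det (transpose X ** weight_mat nu w ** X)"

end

theory Submission
  imports Defs
begin


lemma W_mult: "weight_mat nu w *v y = (\<chi> k. w $ k * nu $ k * y $ k)"
proof -
  have "(\<Sum>j\<in>UNIV. (if i = j then w $ i * nu $ i else 0) * y $ j) = w $ i * nu $ i * y $ i" for i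
    by (simp add: if_distrib[of "\<lambda>a. a * _"] cong: if_cong)
  then show ?thesis by (simp add: weight_mat_def matrix_vector_mult_def vec_eq_iff)
qed

lemma M_mult: "(transpose X ** weight_mat nu w ** X) *v x = transpose X *v (weight_mat nu w *v (X *v x))"
  by (simp add: matrix_vector_mul_assoc matrix_mul_assoc)

lemma quad: "x \<bullet> ((transpose X ** weight_mat nu w ** X) *v x) = (\<Sum>k\<in>UNIV. w $ k * nu $ k * ((X *v x) $ k)^2)"
proof -
  have "x \<bullet> (transpose X *v z) = (X *v x) \<bullet> z" for z
    by (metis dot_lmul_matrix inner_commute transpose_transpose vector_transpose_matrix)
  then show ?thesis
    by (simp add: M_mult W_mult inner_vec_def power2_eq_square mult_ac)
qed

lemma det_nz_ker: "det (A::real^'n^'n) \<noteq> 0 \<longleftrightarrow> (\<forall>x. A *v x = 0 \<longrightarrow> x = 0)"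
  by (meson det_eq_0_rank full_rank_injective less_rank_noninjective
    matrix_nonfull_linear_equations_eq)

lemma key:
  fixes X :: "real ^ 'p ^ 'm"
  assumes nu: "\<forall>i. 0 \<le> nu $ i" and w: "\<forall>i. 0 \<le> w $ i" and v: "\<forall>i. 0 \<le> v $ i"
    and supp: "\<forall>k. v $ k = 0 \<longrightarrow> w $ k = 0"
    and d: "fdet X nu w \<noteq> 0"
  shows "fdet X nu v \<noteq> 0"
proof
  assume "fdet X nu v = 0"
  then obtain x where x0: "x \<noteq> 0" and Mx: "(transpose X ** weight_mat nu v ** X) *v x = 0"
    unfolding fdet_def using det_nz_ker by blast
  define y where "y = X *v x"
  define f where "f k = v $ k * nu $ k * (y $ k)^2" for k
  have s0: "sum f UNIV = 0"
    using quad[of x X nu v] Mx by (simp add: y_def f_def)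
  have fnn: "\<And>k. k \<in> UNIV \<Longrightarrow> 0 \<le> f k" using nu v by (simp add: f_def)
  have "\<forall>k\<in>UNIV. f k = 0" using sum_nonneg_eq_0_iff[of UNIV f, OF finite_class.finite_UNIV fnn] s0 by simp
  then have "\<forall>k\<in>UNIV. v $ k * nu $ k * (y $ k)^2 = 0" by (simp add: f_def)
  then have h: "v $ k * nu $ k * (y $ k)^2 = 0" for k by blast
  have z: "w $ k * nu $ k * y $ k = 0" for k
  proof (cases "v $ k = 0")
    case True then show ?thesis using supp by simp
  next
    case False then have "nu $ k = 0 \<or> y $ k = 0" using h[of k] by simp
    then show ?thesis by auto
  qed
  have "weight_mat nu w *v y = 0" by (simp add: W_mult z vec_eq_iff)
  then have "(transpose X ** weight_mat nu w ** X) *v x = 0"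
    by (simp add: M_mult y_def)
  then show False using d x0 det_nz_ker unfolding fdet_def by blast
qed

theorem lemma5:
  fixes X :: "real ^ 'p ^ 'm" and nu :: "real ^ 'm" and w0 :: "real ^ 'm"
  assumes "CARD('m) \<ge> 2" and "CARD('p) \<ge> 2"
    and "\<forall>i. 0 \<le> nu $ i"
    and "\<exists>w \<in> prob_simplex. fdet X nu w > 0"
    and "w0 \<in> prob_simplex" and "\<forall>i. 0 < w0 $ i \<and> w0 $ i < 1"
  shows "fdet X nu w0 > 0"
proof (rule ccontr)
  assume neg: "\<not> fdet X nu w0 > 0"
  obtain w where wS: "w \<in> prob_simplex" and wpos: "fdet X nu w > 0" using assms(4) by blast
  have w0i: "\<forall>i. 0 \<le> w $ i" using wS by (simp add: prob_simplex_def)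
  define g where "g t = fdet X nu ((1 - t) *\<^sub>R w + t *\<^sub>R w0)" for t :: real
  have cont: "isCont g t" for t
    unfolding g_def fdet_def det_def
    by (simp add: matrix_matrix_mult_def weight_mat_def transpose_def if_distrib cong: if_cong
        | intro continuous_intros)+
  have "g 1 \<le> 0" using neg by (simp add: g_def)
  moreover have "0 \<le> g 0" using wpos by (simp add: g_def)
  ultimately obtain t where t: "0 \<le> t" "t \<le> 1" "g t = 0"
    using IVT2[of g 1 0 0] cont by auto
  have "fdet X nu ((1 - t) *\<^sub>R w + t *\<^sub>R w0) \<noteq> 0"
  proof (rule key[OF assms(3) w0i])
    show "\<forall>i. 0 \<le> ((1 - t) *\<^sub>R w + t *\<^sub>R w0) $ i"
      using t w0i assms(6) by (metis add_nonneg_nonneg diff_ge_0_iff_ge less_imp_le mult_nonneg_nonneg vector_add_component vector_scaleR_component real_scaleR_def)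
    show "\<forall>k. ((1 - t) *\<^sub>R w + t *\<^sub>R w0) $ k = 0 \<longrightarrow> w $ k = 0"
    proof (intro allI impI)
      fix k assume h: "((1 - t) *\<^sub>R w + t *\<^sub>R w0) $ k = 0"
      have a: "0 \<le> (1 - t) * w $ k" using t w0i by simp
      have b: "0 \<le> t * w0 $ k" using t assms(6) by (simp add: less_imp_le)
      have "(1 - t) * w $ k + t * w0 $ k = 0" using h by simp
      then have "t * w0 $ k = 0" "(1 - t) * w $ k = 0" using a b by linarith+
      then show "w $ k = 0" using assms(6) by (cases "t = 0") (auto, metis less_irrefl)
    qed
    show "fdet X nu w \<noteq> 0" using wpos by simp
  qed
  then show False using t by (simp add: g_def)
qed
end
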